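(* Let $G$ be a finite connected graph with node set $V$ and let $r$ be a ranking of $V$. There is a one-to-all distance based algorithm which computes all eccentricities $e(v)$, $v\in V$, a tight lower certificate $L\subseteq A_r(V)$, and the set $U^{\preceq}$ (which is the unique minimum-size tight upper certificate), using $|U^{\preceq}|+2|L|$ one-to-all distance queries.
   Context: $G$ is undirected, unweighted, connected with finite node set $V$; $d$ is shortest-path distance, $e(u)=\max_v d(u,v)$. A ranking $r$ is an injective map from $V$ to a totally ordered set; the antipode $A_r(u)$ is the node $v$ maximizing $(d(u,v),r(v))$ lexicographically; $A_r(V)=\{A_r(u):u\in V\}$. A one-to-all distance query from $x$ computes $(d(x,v))_{v\in V}$. For $L\subseteq V$, $e_L(v)=\max_{x\in L}d(v,x)$; for $U\subseteq V$, $e^U(v)=\min_{x\in U}(d(v,x)+e(x))$. $L$ is a tight lower certificate if $e_L(v)=e(v)$ for all $v$; $U$ is a tight upper certificate if $e^U(v)=e(v)$ for all $v$. Write $u\preceq x$ if $e(u)=d(u,x)+e(x)$; $U^{\preceq}$ is the set of nodes $x$ that are maximal for $\preceq$ (i.e. $x\preceq y$ implies $y=x$). *)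

theory Defs
  imports Main
begin

definition walk :: "('a \<Rightarrow> 'a \<Rightarrow> bool) \<Rightarrow> 'a list \<Rightarrow> bool" where
  "walk E xs \<longleftrightarrow> xs \<noteq> [] \<and> (\<forall>i. Suc i < length xs \<longrightarrow> E (xs ! i) (xs ! Suc i))"

definition conn_graph :: "'a set \<Rightarrow> ('a \<Rightarrow> 'a \<Rightarrow> bool) \<Rightarrow> bool" where
  "conn_graph V E \<longleftrightarrow> finite V \<and> V \<noteq> {}
     \<and> (\<forall>u v. E u v \<longrightarrow> u \<in> V \<and> v \<in> V)
     \<and> (\<forall>u v. E u v \<longrightarrow> E v u) \<and> (\<forall>u. \<not> E u u)
     \<and> (\<forall>u\<in>V. \<forall>v\<in>V. \<exists>xs. walk E xs \<and> hd xs = u \<and> last xs = v)"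

definition dist :: "('a \<Rightarrow> 'a \<Rightarrow> bool) \<Rightarrow> 'a \<Rightarrow> 'a \<Rightarrow> nat" where
  "dist E u v = (LEAST n. \<exists>xs. walk E xs \<and> hd xs = u \<and> last xs = v \<and> length xs = Suc n)"

definition ecc :: "'a set \<Rightarrow> ('a \<Rightarrow> 'a \<Rightarrow> bool) \<Rightarrow> 'a \<Rightarrow> nat" where
  "ecc V E u = Max ((\<lambda>v. dist E u v) ` V)"

definition antipode :: "'a set \<Rightarrow> ('a \<Rightarrow> 'a \<Rightarrow> bool) \<Rightarrow> ('a \<Rightarrow> 'b::linorder) \<Rightarrow> 'a \<Rightarrow> 'a" where
  "antipode V E r u = (THE v. v \<in> V \<and> (\<forall>w\<in>V. w \<noteq> v \<longrightarrow>
      dist E u w < dist E u v \<or> (dist E u w = dist E u v \<and> r w < r v)))"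

definition ecc_low :: "('a \<Rightarrow> 'a \<Rightarrow> bool) \<Rightarrow> 'a set \<Rightarrow> 'a \<Rightarrow> nat" where
  "ecc_low E L v = Max ((\<lambda>x. dist E v x) ` L)"

definition ecc_up :: "'a set \<Rightarrow> ('a \<Rightarrow> 'a \<Rightarrow> bool) \<Rightarrow> 'a set \<Rightarrow> 'a \<Rightarrow> nat" where
  "ecc_up V E U v = Min ((\<lambda>x. dist E v x + ecc V E x) ` U)"

text \<open>Empty certificates are excluded (max/min over the empty set is -\<infinity>/+\<infinity>,
  never equal to an eccentricity).\<close>
definition tight_lower :: "'a set \<Rightarrow> ('a \<Rightarrow> 'a \<Rightarrow> bool) \<Rightarrow> 'a set \<Rightarrow> bool" where
  "tight_lower V E L \<longleftrightarrow> L \<subseteq> V \<and> L \<noteq> {} \<and> (\<forall>v\<in>V. ecc_low E L v = ecc V E v)"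

definition tight_upper :: "'a set \<Rightarrow> ('a \<Rightarrow> 'a \<Rightarrow> bool) \<Rightarrow> 'a set \<Rightarrow> bool" where
  "tight_upper V E U \<longleftrightarrow> U \<subseteq> V \<and> U \<noteq> {} \<and> (\<forall>v\<in>V. ecc_up V E U v = ecc V E v)"

definition preceq :: "'a set \<Rightarrow> ('a \<Rightarrow> 'a \<Rightarrow> bool) \<Rightarrow> 'a \<Rightarrow> 'a \<Rightarrow> bool" where
  "preceq V E u x \<longleftrightarrow> ecc V E u = dist E u x + ecc V E x"

definition Upre :: "'a set \<Rightarrow> ('a \<Rightarrow> 'a \<Rightarrow> bool) \<Rightarrow> 'a set" where
  "Upre V E = {x\<in>V. \<forall>y\<in>V. preceq V E x y \<longrightarrow> y = x}"

definition query :: "'a set \<Rightarrow> ('a \<Rightarrow> 'a \<Rightarrow> bool) \<Rightarrow> 'a \<Rightarrow> ('a \<Rightarrow> nat)" where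
  "query V E x = (\<lambda>v. if v \<in> V then dist E x v else 0)"

text \<open>An algorithm, given the history of queries and answers, either asks the next
  query (Inl x) or stops with output (eccentricities, L, U) (Inr).\<close>
type_synonym ('a) strategy =
  "('a \<times> ('a \<Rightarrow> nat)) list \<Rightarrow> 'a + (('a \<Rightarrow> nat) \<times> 'a set \<times> 'a set)"

primrec trace :: "'a strategy \<Rightarrow> ('a \<Rightarrow> ('a \<Rightarrow> nat)) \<Rightarrow> nat \<Rightarrow> ('a \<times> ('a \<Rightarrow> nat)) list" where
  "trace A Q 0 = []"
| "trace A Q (Suc k) = (case A (trace A Q k) of
      Inl x \<Rightarrow> trace A Q k @ [(x, Q x)]
    | Inr _ \<Rightarrow> trace A Q k)"

end

theory Submission
  imports Defs
begin

lemma walk_Cons2: "walk E (x # y # zs) \<longleftrightarrow> E x y \<and> walk E (y # zs)"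
proof
  assume H: "walk E (x # y # zs)"
  have "E x y" using H unfolding walk_def by (metis One_nat_def length_Cons lessI nth_Cons_0 nth_Cons_Suc zero_less_Suc less_Suc_eq_0_disj Suc_less_eq)
  moreover have "walk E (y # zs)" unfolding walk_def
  proof (intro conjI allI impI)
    fix i assume "Suc i < length (y # zs)"
    then have "Suc (Suc i) < length (x # y # zs)" by simp
    then have "E ((x # y # zs) ! Suc i) ((x # y # zs) ! Suc (Suc i))" using H unfolding walk_def by blast
    then show "E ((y # zs) ! i) ((y # zs) ! Suc i)" by simp
  qed simp
  ultimately show "E x y \<and> walk E (y # zs)" by simp
next
  assume H: "E x y \<and> walk E (y # zs)"
  show "walk E (x # y # zs)" unfolding walk_def
  proof (intro conjI allI impI)
    fix i assume i: "Suc i < length (x # y # zs)"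
    show "E ((x # y # zs) ! i) ((x # y # zs) ! Suc i)"
    proof (cases i)
      case 0 then show ?thesis using H by simp
    next
      case (Suc j)
      then have "Suc j < length (y # zs)" using i by simp
      then show ?thesis using H Suc unfolding walk_def by simp
    qed
  qed simp
qed

lemma walk_single: "walk E [x]" by (simp add: walk_def)

lemma walk_append: "walk E xs \<Longrightarrow> walk E ys \<Longrightarrow> last xs = hd ys \<Longrightarrow> walk E (xs @ tl ys)"
proof (induction xs rule: induct_list012)
  case 1 then show ?case by (simp add: walk_def)
next
  case (2 x)
  then have "ys \<noteq> []" by (simp add: walk_def)
  then show ?case using 2 by (cases ys) auto
next
  case (3 x y zs)
  have "walk E (y # zs)" using "3.prems"(1) walk_Cons2 by metis
  then have "walk E ((y # zs) @ tl ys)" using 3 by simp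
  then show ?case using "3.prems"(1) walk_Cons2 by (metis append_Cons)
qed

lemma walk_rev: "walk E xs \<Longrightarrow> (\<And>u v. E u v \<Longrightarrow> E v u) \<Longrightarrow> walk E (rev xs)"
proof (induction xs rule: induct_list012)
  case 1 then show ?case by simp
next
  case (2 x) then show ?case by simp
next
  case (3 x y zs)
  have w: "walk E (rev (y # zs))" using 3 walk_Cons2 by metis
  have "E y x" using 3 walk_Cons2 by metis
  then have "walk E [y, x]" by (simp add: walk_Cons2 walk_single)
  then have "walk E (rev (y # zs) @ tl [y, x])" using walk_append[OF w] by (metis last_rev list.sel(1))
  then show ?case by simp
qed

locale cg =
  fixes V :: "'a set" and E :: "'a \<Rightarrow> 'a \<Rightarrow> bool"
  assumes cg: "conn_graph V E"
begin

lemma finV: "finite V" and neV: "V \<noteq> {}" and Esym: "\<And>u v. E u v \<Longrightarrow> E v u"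
  and conn: "\<And>u v. u \<in> V \<Longrightarrow> v \<in> V \<Longrightarrow> \<exists>xs. walk E xs \<and> hd xs = u \<and> last xs = v"
  using cg unfolding conn_graph_def by auto

definition pw where "pw u v n \<longleftrightarrow> (\<exists>xs. walk E xs \<and> hd xs = u \<and> last xs = v \<and> length xs = Suc n)"

lemma dist_pw_def: "dist E u v = (LEAST n. pw u v n)"
  unfolding dist_def pw_def by simp

lemma ex_pw: "u \<in> V \<Longrightarrow> v \<in> V \<Longrightarrow> \<exists>n. pw u v n"
proof -
  assume "u \<in> V" "v \<in> V"
  then obtain xs where "walk E xs" "hd xs = u" "last xs = v" using conn by blast
  moreover then have "length xs = Suc (length xs - 1)" by (simp add: walk_def)
  ultimately show ?thesis unfolding pw_def by blast
qed

lemma dist_pw: "u \<in> V \<Longrightarrow> v \<in> V \<Longrightarrow> pw u v (dist E u v)"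
  unfolding dist_pw_def using ex_pw by (metis LeastI_ex)

lemma dist_le: "pw u v n \<Longrightarrow> dist E u v \<le> n"
  unfolding dist_pw_def by (rule Least_le)

lemma d_refl: "dist E u u = 0"
proof -
  have "pw u u 0" unfolding pw_def using walk_single[of E u] by (intro exI[of _ "[u]"]) simp
  then show ?thesis using dist_le by fastforce
qed

lemma pw_sym: "pw u v n \<Longrightarrow> pw v u n"
  unfolding pw_def using walk_rev Esym
  by (metis hd_rev last_rev length_rev)

lemma d_sym: "u \<in> V \<Longrightarrow> v \<in> V \<Longrightarrow> dist E u v = dist E v u"
  using dist_pw dist_le pw_sym by (metis le_antisym)

lemma pw_trans: "pw u v a \<Longrightarrow> pw v w b \<Longrightarrow> pw u w (a + b)"
proof -
  assume "pw u v a" "pw v w b"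
  then obtain xs ys where xs: "walk E xs" "hd xs = u" "last xs = v" "length xs = Suc a"
    and ys: "walk E ys" "hd ys = v" "last ys = w" "length ys = Suc b"
    unfolding pw_def by blast
  have ne: "xs \<noteq> []" "ys \<noteq> []" using xs ys by auto
  have "walk E (xs @ tl ys)" using walk_append[of E xs ys] xs ys by simp
  moreover have "hd (xs @ tl ys) = u" using xs ne by simp
  moreover have "last (xs @ tl ys) = w"
  proof (cases "tl ys = []")
    case True
    then have "ys = [hd ys]" using ne by (metis list.collapse)
    then show ?thesis using True xs ys by (metis append_Nil2 last_ConsL)
  next
    case False
    then show ?thesis using ys ne by (metis last_appendR last_tl)
  qed
  moreover have "length (xs @ tl ys) = Suc (a + b)" using xs ys by simp
  ultimately show ?thesis unfolding pw_def by blast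
qed

lemma d_tri: "u \<in> V \<Longrightarrow> v \<in> V \<Longrightarrow> w \<in> V \<Longrightarrow> dist E u w \<le> dist E u v + dist E v w"
  using dist_pw dist_le pw_trans by metis

lemma d_zero: "u \<in> V \<Longrightarrow> v \<in> V \<Longrightarrow> dist E u v = 0 \<Longrightarrow> u = v"
proof -
  assume a: "u \<in> V" "v \<in> V" "dist E u v = 0"
  then have "pw u v 0" using dist_pw by metis
  then obtain xs where "walk E xs" "hd xs = u" "last xs = v" "length xs = 1" unfolding pw_def by auto
  then show ?thesis by (metis One_nat_def last_ConsL length_0_conv length_Suc_conv list.sel(1))
qed

abbreviation d where "d \<equiv> dist E"
abbreviation e where "e \<equiv> ecc V E"

lemma e_ge: "u \<in> V \<Longrightarrow> w \<in> V \<Longrightarrow> d u w \<le> e u"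
  unfolding ecc_def using finV by simp

lemma e_att: "u \<in> V \<Longrightarrow> \<exists>w\<in>V. d u w = e u"
  unfolding ecc_def using finV neV by (metis (mono_tags, lifting) Max_in finite_imageI image_iff image_is_empty)

lemma e_tri: "u \<in> V \<Longrightarrow> y \<in> V \<Longrightarrow> e u \<le> d u y + e y"
proof -
  assume a: "u \<in> V" "y \<in> V"
  then obtain w where w: "w \<in> V" "d u w = e u" using e_att by blast
  have "d u w \<le> d u y + d y w" using d_tri a w by blast
  also have "\<dots> \<le> d u y + e y" using e_ge a w by simp
  finally show ?thesis using w by simp
qed

lemma pre_refl: "preceq V E u u"
  unfolding preceq_def using d_refl by simp

lemma pre_trans: "u \<in> V \<Longrightarrow> x \<in> V \<Longrightarrow> y \<in> V \<Longrightarrow> preceq V E u x \<Longrightarrow> preceq V E x y \<Longrightarrow> preceq V E u y"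
  unfolding preceq_def using d_tri[of u x y] e_tri[of u y] by linarith

lemma pre_lt: "u \<in> V \<Longrightarrow> y \<in> V \<Longrightarrow> preceq V E u y \<Longrightarrow> y \<noteq> u \<Longrightarrow> e y < e u"
  unfolding preceq_def using d_zero[of u y] by fastforce

lemma Upre_sub: "Upre V E \<subseteq> V" unfolding Upre_def by auto

lemma max_above: "v \<in> V \<Longrightarrow> \<exists>y\<in>Upre V E. preceq V E v y"
proof -
  assume v: "v \<in> V"
  define S where "S = {y\<in>V. preceq V E v y}"
  have "v \<in> S" unfolding S_def using v pre_refl by simp
  moreover have fS: "finite S" unfolding S_def using finV by simp
  ultimately obtain y where y: "y \<in> S" "e y = Min (e ` S)"
    by (metis (mono_tags, lifting) Min_in empty_iff finite_imageI image_iff image_is_empty)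
  have "y \<in> Upre V E" unfolding Upre_def
  proof (safe)
    show "y \<in> V" using y S_def by simp
  next
    fix z assume z: "z \<in> V" "preceq V E y z"
    show "z = y"
    proof (rule ccontr)
      assume "z \<noteq> y"
      then have "e z < e y" using pre_lt[of y z] z y unfolding S_def by simp
      moreover have "z \<in> S" using pre_trans[of v y z] z y v unfolding S_def by simp
      then have "e y \<le> e z" using y fS by simp
      ultimately show False by simp
    qed
  qed
  then show ?thesis using y S_def by blast
qed

lemma Upre_ne: "Upre V E \<noteq> {}" using max_above neV by blast

lemma tight_Upre: "tight_upper V E (Upre V E)"
  unfolding tight_upper_def
proof (intro conjI ballI)
  fix v assume v: "v \<in> V"
  have fU: "finite (Upre V E)" using finV Upre_sub finite_subset by blast
  obtain y where y: "y \<in> Upre V E" "preceq V E v y" using max_above v by blast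
  have "ecc_up V E (Upre V E) v \<le> d v y + e y" unfolding ecc_up_def using fU y by simp
  also have "\<dots> = e v" using y unfolding preceq_def by simp
  finally have "ecc_up V E (Upre V E) v \<le> e v" .
  moreover have "e v \<le> ecc_up V E (Upre V E) v" unfolding ecc_up_def
    using fU Upre_ne Upre_sub e_tri v by (subst Min_ge_iff) auto
  ultimately show "ecc_up V E (Upre V E) v = e v" by simp
qed (use Upre_sub Upre_ne in auto)

lemma up_att: "finite U \<Longrightarrow> U \<noteq> {} \<Longrightarrow> \<exists>x\<in>U. ecc_up V E U v = d v x + e x"
  unfolding ecc_up_def by (metis (mono_tags, lifting) Min_in finite_imageI image_iff image_is_empty)

lemma Upre_min: "tight_upper V E U' \<Longrightarrow> Upre V E \<subseteq> U'"
proof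
  fix x assume t: "tight_upper V E U'" and x: "x \<in> Upre V E"
  have U': "U' \<subseteq> V" "U' \<noteq> {}" "finite U'" using t finV finite_subset unfolding tight_upper_def by auto
  have xV: "x \<in> V" using x Upre_sub by auto
  obtain y where y: "y \<in> U'" "ecc_up V E U' x = d x y + e y" using up_att U' by blast
  then have "preceq V E x y" using t xV unfolding tight_upper_def preceq_def by simp
  then have "y = x" using x y U' unfolding Upre_def by auto
  then show "x \<in> U'" using y by simp
qed

lemma part2: "tight_upper V E (Upre V E) \<and> (\<forall>U'. tight_upper V E U' \<longrightarrow>
             card (Upre V E) \<le> card U' \<and> (card U' = card (Upre V E) \<longrightarrow> U' = Upre V E))"
proof (intro conjI allI impI tight_Upre)
  fix U' assume t: "tight_upper V E U'"
  have f: "finite U'" using t finV finite_subset unfolding tight_upper_def by auto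
  show "card (Upre V E) \<le> card U'" using Upre_min[OF t] card_mono f by blast
  assume "card U' = card (Upre V E)"
  then show "U' = Upre V E" using Upre_min[OF t] card_subset_eq f by metis
qed

end

type_synonym 'a stt = "'a set \<times> 'a set \<times> 'a option \<times> ('a \<Rightarrow> 'a \<Rightarrow> nat)"

definition lbK :: "('a \<Rightarrow> 'a \<Rightarrow> nat) \<Rightarrow> 'a set \<Rightarrow> 'a \<Rightarrow> nat" where
  "lbK K L v = Max ((\<lambda>x. K x v) ` L)"
definition ubK :: "'a set \<Rightarrow> ('a \<Rightarrow> 'a \<Rightarrow> nat) \<Rightarrow> 'a set \<Rightarrow> 'a \<Rightarrow> nat" where
  "ubK V K U v = Min ((\<lambda>x. K x v + Max (K x ` V)) ` U)"
definition undet :: "'a set \<Rightarrow> ('a \<Rightarrow> 'a \<Rightarrow> nat) \<Rightarrow> 'a set \<Rightarrow> 'a set \<Rightarrow> 'a \<Rightarrow> bool" where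
  "undet V K L U v \<longleftrightarrow> L = {} \<or> U = {} \<or> lbK K L v < ubK V K U v"
definition antiF :: "'a set \<Rightarrow> ('a \<Rightarrow> 'b::linorder) \<Rightarrow> ('a \<Rightarrow> nat) \<Rightarrow> 'a" where
  "antiF V r f = (SOME a. a \<in> V \<and> (\<forall>w\<in>V. w \<noteq> a \<longrightarrow> f w < f a \<or> (f w = f a \<and> r w < r a)))"
fun upd :: "'a set \<Rightarrow> ('a \<Rightarrow> 'b::linorder) \<Rightarrow> 'a stt \<Rightarrow> 'a \<times> ('a \<Rightarrow> nat) \<Rightarrow> 'a stt" where
  "upd V r (L, U, P, K) (x, f) = (case P of Some a \<Rightarrow> (insert x L, U, None, K(x := f))
     | None \<Rightarrow> if L = {} \<or> lbK K L x < Max (f ` V) then (L, U, Some (antiF V r f), K(x := f))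
              else (L, insert x U, None, K(x := f)))"
definition st0 :: "'a stt" where "st0 = ({}, {}, None, \<lambda>_ _. 0)"
definition sth :: "'a set \<Rightarrow> ('a \<Rightarrow> 'b::linorder) \<Rightarrow> ('a \<times> ('a \<Rightarrow> nat)) list \<Rightarrow> 'a stt" where
  "sth V r h = foldl (upd V r) st0 h"
definition Und :: "'a set \<Rightarrow> ('a \<Rightarrow> 'a \<Rightarrow> nat) \<Rightarrow> 'a set \<Rightarrow> 'a set \<Rightarrow> 'a set" where
  "Und V K L U = {v\<in>V. undet V K L U v}"
definition selU :: "'a set \<Rightarrow> ('a \<Rightarrow> 'a \<Rightarrow> nat) \<Rightarrow> 'a set \<Rightarrow> 'a set \<Rightarrow> 'a" where
  "selU V K L U = (SOME u. u \<in> Und V K L U \<and> lbK K L u = Min (lbK K L ` Und V K L U))"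
definition algo :: "'a set \<Rightarrow> ('a \<Rightarrow> 'b::linorder) \<Rightarrow> 'a strategy" where
  "algo V r h = (case sth V r h of (L, U, P, K) \<Rightarrow> (case P of Some a \<Rightarrow> Inl a
     | None \<Rightarrow> if Und V K L U = {} then Inr (lbK K L, L, U) else Inl (selU V K L U)))"

locale cgr = cg V E for V :: "'a set" and E +
  fixes r :: "'a \<Rightarrow> 'b::linorder"
  assumes inj: "inj_on r V"
begin

abbreviation Q where "Q \<equiv> query V E"

lemma maxQ: "u \<in> V \<Longrightarrow> Max (Q u ` V) = e u"
  unfolding ecc_def query_def by (rule arg_cong[where f=Max]) auto

lemma anti: assumes u: "u \<in> V"
  shows "antiF V r (Q u) = antipode V E r u \<and> antipode V E r u \<in> V \<and> d u (antipode V E r u) = e u"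
proof -
  define f where "f = Q u"
  define Pa where "Pa a \<longleftrightarrow> a \<in> V \<and> (\<forall>w\<in>V. w \<noteq> a \<longrightarrow> f w < f a \<or> (f w = f a \<and> r w < r a))" for a
  define M where "M = Max (f ` V)"
  define S where "S = {v\<in>V. f v = M}"
  have fS: "finite S" unfolding S_def using finV by simp
  have "M \<in> f ` V" unfolding M_def using finV neV by (intro Max_in) auto
  then have "S \<noteq> {}" unfolding S_def by auto
  then have "Max (r ` S) \<in> r ` S" using fS by (intro Max_in) auto
  then obtain a where a: "a \<in> S" "r a = Max (r ` S)" by auto
  have "Pa a" unfolding Pa_def
  proof (intro conjI ballI impI)
    show "a \<in> V" using a S_def by simp
    fix w assume w: "w \<in> V" "w \<noteq> a"
    have "f w \<le> M" unfolding M_def using w finV by simp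
    moreover have "f a = M" using a S_def by simp
    moreover have "f w = M \<Longrightarrow> r w < r a"
    proof -
      assume "f w = M"
      then have "w \<in> S" using w S_def by simp
      then have "r w \<le> r a" using a fS by simp
      moreover have "r w \<noteq> r a" using inj w \<open>a \<in> S\<close> S_def unfolding inj_on_def by auto
      ultimately show ?thesis by simp
    qed
    ultimately show "f w < f a \<or> (f w = f a \<and> r w < r a)" by linarith
  qed
  have uniq: "Pa b \<Longrightarrow> b = a" for b
  proof (rule ccontr)
    assume b: "Pa b" "b \<noteq> a"
    have bV: "b \<in> V" using b unfolding Pa_def by simp
    have aV: "a \<in> V" using \<open>Pa a\<close> unfolding Pa_def by simp
    have 1: "f b < f a \<or> (f b = f a \<and> r b < r a)" using \<open>Pa a\<close> bV b(2) unfolding Pa_def by blast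
    have 2: "f a < f b \<or> (f a = f b \<and> r a < r b)" using b(1) aV b(2)[symmetric] unfolding Pa_def by blast
    from 1 2 show False by auto
  qed
  have eq: "antiF V r f = (SOME a. Pa a)" unfolding antiF_def Pa_def by simp
  have "Pa (SOME a. Pa a)" using \<open>Pa a\<close> by (rule someI)
  then have s: "antiF V r f = a" using eq uniq by simp
  have Pd: "(v \<in> V \<and> (\<forall>w\<in>V. w \<noteq> v \<longrightarrow> dist E u w < dist E u v \<or> (dist E u w = dist E u v \<and> r w < r v))) \<longleftrightarrow> Pa v" for v
    unfolding Pa_def f_def query_def by auto
  have t: "antipode V E r u = a" unfolding antipode_def Pd using \<open>Pa a\<close> uniq by (rule the_equality)
  have "f a = M" using a S_def by simp
  then have "d u a = e u" unfolding M_def f_def using maxQ u a S_def by (simp add: query_def)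
  then show ?thesis using s t f_def a S_def by simp
qed


lemma low_le: "L \<subseteq> V \<Longrightarrow> L \<noteq> {} \<Longrightarrow> v \<in> V \<Longrightarrow> ecc_low E L v \<le> e v"
proof -
  assume a: "L \<subseteq> V" "L \<noteq> {}" "v \<in> V"
  then have "finite L" using finV finite_subset by blast
  then show ?thesis unfolding ecc_low_def using a e_ge by (subst Max_le_iff) auto
qed

lemma low_ge: "finite L \<Longrightarrow> x \<in> L \<Longrightarrow> d v x \<le> ecc_low E L v"
  unfolding ecc_low_def by simp

lemma low_att: "finite L \<Longrightarrow> L \<noteq> {} \<Longrightarrow> \<exists>x\<in>L. ecc_low E L v = d v x"
proof -
  assume "finite L" "L \<noteq> {}"
  then have "ecc_low E L v \<in> (\<lambda>x. d v x) ` L" unfolding ecc_low_def by (intro Max_in) auto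
  then show ?thesis by auto
qed

lemma up_ge: "U \<subseteq> V \<Longrightarrow> U \<noteq> {} \<Longrightarrow> v \<in> V \<Longrightarrow> e v \<le> ecc_up V E U v"
proof -
  assume a: "U \<subseteq> V" "U \<noteq> {}" "v \<in> V"
  then have "finite U" using finV finite_subset by blast
  then show ?thesis unfolding ecc_up_def using a e_tri by (subst Min_ge_iff) auto
qed

lemma up_le: "finite U \<Longrightarrow> x \<in> U \<Longrightarrow> ecc_up V E U v \<le> d v x + e x"
  unfolding ecc_up_def by simp

lemma keyB:
  fixes L U x
  defines "lb \<equiv> ecc_low E L" and "ub \<equiv> ecc_up V E U"
  assumes LV: "L \<subseteq> V" and Lne: "L \<noteq> {}" and UU: "U \<subseteq> Upre V E" and xV: "x \<in> V"
    and und: "U = {} \<or> lb x < ub x"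
    and mn: "\<forall>w\<in>V. (U = {} \<or> lb w < ub w) \<longrightarrow> lb x \<le> lb w"
    and ge: "e x \<le> lb x"
  shows "x \<notin> U \<and> x \<in> Upre V E"
proof -
  have fL: "finite L" using LV finV finite_subset by blast
  have UV: "U \<subseteq> V" using UU Upre_sub by blast
  have fU: "finite U" using UV finV finite_subset by blast
  have lbx: "lb x = e x" using low_le[OF LV Lne xV] ge unfolding lb_def by simp
  have xU: "x \<notin> U"
  proof
    assume "x \<in> U"
    then have "ub x \<le> e x" using up_le[OF fU, of x x] d_refl unfolding ub_def by simp
    then show False using und lbx \<open>x \<in> U\<close> by auto
  qed
  have "x \<in> Upre V E" unfolding Upre_def
  proof (safe)
    show "x \<in> V" by fact
  next
    fix y assume yV: "y \<in> V" and xy: "preceq V E x y"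
    show "y = x"
    proof (rule ccontr)
      assume yx: "y \<noteq> x"
      obtain z where z: "z \<in> Upre V E" "preceq V E y z" using max_above yV by blast
      have zV: "z \<in> V" using z Upre_sub by blast
      have xz: "preceq V E x z" using pre_trans[OF xV yV zV xy z(2)] .
      have zx: "z \<noteq> x"
      proof
        assume "z = x"
        then have "e x < e y" using pre_lt[OF yV xV] z yx by simp
        moreover have "e y < e x" using pre_lt[OF xV yV xy yx] .
        ultimately show False by simp
      qed
      have ezx: "e z < e x" using pre_lt[OF xV zV xz zx] .
      have exz: "e x = d x z + e z" using xz unfolding preceq_def by simp
      obtain p where p: "p \<in> L" "lb x = d x p" using low_att[OF fL Lne] unfolding lb_def by blast
      have pV: "p \<in> V" using p LV by blast
      have "d x p \<le> d x z + d z p" using d_tri[OF xV zV pV] .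
      then have "e z \<le> d z p" using p lbx exz by simp
      also have "d z p \<le> lb z" using low_ge[OF fL p(1)] unfolding lb_def .
      finally have "e z \<le> lb z" .
      then have lbz: "lb z = e z" using low_le[OF LV Lne zV] unfolding lb_def by simp
      have undz: "U = {} \<or> lb z < ub z"
      proof (cases "U = {}")
        case False
        have "e z \<le> ub z" using up_ge[OF UV False zV] unfolding ub_def .
        moreover have "ub z \<noteq> e z"
        proof
          assume "ub z = e z"
          obtain w where w: "w \<in> U" "ub z = d z w + e w" using up_att[OF fU False] unfolding ub_def by blast
          have "preceq V E z w" using w \<open>ub z = e z\<close> unfolding preceq_def by simp
          then have "w = z" using z w UV unfolding Upre_def by blast
          then have "z \<in> U" using w by simp
          then have "ub x \<le> d x z + e z" using up_le[OF fU] unfolding ub_def by blast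
          then have "ub x \<le> lb x" using exz lbx by simp
          then show False using und False by simp
        qed
        ultimately show ?thesis using lbz by simp
      qed simp
      have "lb x \<le> lb z" using mn zV undz by blast
      then show False using lbz lbx ezx by simp
    qed
  qed
  then show ?thesis using xU by simp
qed

definition Inv :: "'a stt \<Rightarrow> nat \<Rightarrow> bool" where
  "Inv S n \<longleftrightarrow> (case S of (L, U, P, K) \<Rightarrow> L \<subseteq> V \<and> L \<subseteq> antipode V E r ` V \<and> U \<subseteq> Upre V E
     \<and> (\<forall>x\<in>L \<union> U. K x = Q x) \<and> (\<forall>a. P = Some a \<longrightarrow> a \<in> V \<and> a \<notin> L \<and> a \<in> antipode V E r ` V)
     \<and> n = card U + 2 * card L + (if P = None then 0 else 1))"

lemma lbK_eq: "L \<subseteq> V \<Longrightarrow> (\<forall>x\<in>L. K x = Q x) \<Longrightarrow> v \<in> V \<Longrightarrow> lbK K L v = ecc_low E L v"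
  unfolding lbK_def ecc_low_def
  by (rule arg_cong[where f=Max], rule image_cong) (auto simp: query_def d_sym)

lemma ubK_eq: "U \<subseteq> V \<Longrightarrow> (\<forall>x\<in>U. K x = Q x) \<Longrightarrow> v \<in> V \<Longrightarrow> ubK V K U v = ecc_up V E U v"
  unfolding ubK_def ecc_up_def
proof (rule arg_cong[where f=Min], rule image_cong)
  fix x assume "U \<subseteq> V" "\<forall>x\<in>U. K x = Q x" "v \<in> V" "x \<in> U"
  then show "K x v + Max (K x ` V) = d v x + e x" using maxQ[of x] by (auto simp: query_def d_sym)
qed simp

lemma undet_eq: "L \<subseteq> V \<Longrightarrow> U \<subseteq> V \<Longrightarrow> (\<forall>x\<in>L \<union> U. K x = Q x) \<Longrightarrow> v \<in> V \<Longrightarrow>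
   undet V K L U v \<longleftrightarrow> L = {} \<or> U = {} \<or> ecc_low E L v < ecc_up V E U v"
  unfolding undet_def using lbK_eq[of L K v] ubK_eq[of U K v] by auto


lemma step:
  assumes I: "Inv (sth V r h) n" and A: "algo V r h = Inl x"
  shows "x \<in> V \<and> Inv (upd V r (sth V r h) (x, Q x)) (Suc n)"
proof -
  obtain L U P K where S: "sth V r h = (L, U, P, K)" by (metis prod_cases4)
  have LV: "L \<subseteq> V" and LA: "L \<subseteq> antipode V E r ` V" and UU: "U \<subseteq> Upre V E"
    and KQ: "\<forall>y\<in>L \<union> U. K y = Q y" and PP: "\<forall>a. P = Some a \<longrightarrow> a \<in> V \<and> a \<notin> L \<and> a \<in> antipode V E r ` V"
    and n: "n = card U + 2 * card L + (if P = None then 0 else 1)"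
    using I S unfolding Inv_def by auto
  have UV: "U \<subseteq> V" using UU Upre_sub by blast
  have fL: "finite L" using LV finV finite_subset by blast
  have fU: "finite U" using UV finV finite_subset by blast
  show ?thesis
  proof (cases P)
    case (Some a)
    then have xa: "x = a" using A S unfolding algo_def by simp
    have "upd V r (sth V r h) (x, Q x) = (insert a L, U, None, K(a := Q a))" using S Some xa by simp
    moreover have "card (insert a L) = Suc (card L)" using fL PP Some by simp
    ultimately show ?thesis using PP Some LV LA UU KQ n xa unfolding Inv_def by auto
  next
    case None
    define D where "D = Und V K L U"
    have Dne: "D \<noteq> {}" and xs: "x = selU V K L U" using A S None unfolding algo_def D_def
      by (auto split: if_splits)
    have fD: "finite D" unfolding D_def Und_def using finV by simp
    have "Min (lbK K L ` D) \<in> lbK K L ` D" using fD Dne by (intro Min_in) auto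
    then obtain u where "u \<in> D" "lbK K L u = Min (lbK K L ` D)" by auto
    then have "x \<in> D \<and> lbK K L x = Min (lbK K L ` D)" unfolding xs selU_def D_def[symmetric]
      by (rule someI[where P="\<lambda>u. u \<in> D \<and> lbK K L u = Min (lbK K L ` D)", OF conjI])
    then have xD: "x \<in> D" and xmin: "\<forall>w\<in>D. lbK K L x \<le> lbK K L w" using fD by auto
    have xV: "x \<in> V" using xD unfolding D_def Und_def by simp
    have und_iff: "w \<in> D \<longleftrightarrow> w \<in> V \<and> (L = {} \<or> U = {} \<or> ecc_low E L w < ecc_up V E U w)" for w
      unfolding D_def Und_def using undet_eq[OF LV UV KQ] by auto
    have lbx: "lbK K L x = ecc_low E L x" using lbK_eq[OF LV _ xV] KQ by simp
    have mQ: "Max (Q x ` V) = e x" using maxQ[OF xV] .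
    have KQ': "\<forall>y\<in>L \<union> U. (K(x := Q x)) y = Q y" using KQ by simp
    show ?thesis
    proof (cases "L = {} \<or> lbK K L x < Max (Q x ` V)")
      case True
      define a where "a = antiF V r (Q x)"
      have an: "a = antipode V E r x" "a \<in> V" "d x a = e x" using anti[OF xV] a_def by auto
      have aL: "a \<notin> L"
      proof
        assume "a \<in> L"
        then have "d x a \<le> ecc_low E L x" using low_ge[OF fL] by simp
        then show False using True \<open>a \<in> L\<close> an lbx mQ by auto
      qed
      have "upd V r (sth V r h) (x, Q x) = (L, U, Some a, K(x := Q x))" using S None True a_def by simp
      then show ?thesis using xV an aL LV LA UU KQ' n None unfolding Inv_def by auto
    next
      case False
      then have Lne: "L \<noteq> {}" and ge: "e x \<le> ecc_low E L x" using lbx mQ by auto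
      have "x \<notin> U \<and> x \<in> Upre V E"
      proof (rule keyB[OF LV Lne UU xV])
        show "U = {} \<or> ecc_low E L x < ecc_up V E U x" using xD und_iff Lne by auto
        show "\<forall>w\<in>V. (U = {} \<or> ecc_low E L w < ecc_up V E U w) \<longrightarrow> ecc_low E L x \<le> ecc_low E L w"
        proof (intro ballI impI)
          fix w assume "w \<in> V" "U = {} \<or> ecc_low E L w < ecc_up V E U w"
          then have "w \<in> D" using und_iff by auto
          then have "lbK K L x \<le> lbK K L w" using xmin by simp
          then show "ecc_low E L x \<le> ecc_low E L w" using lbK_eq[OF LV _ \<open>w \<in> V\<close>] KQ lbx by simp
        qed
        show "e x \<le> ecc_low E L x" by fact
      qed
      then have xU: "x \<notin> U" "x \<in> Upre V E" by auto
      have "upd V r (sth V r h) (x, Q x) = (L, insert x U, None, K(x := Q x))" using S None False by simp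
      moreover have "card (insert x U) = Suc (card U)" using fU xU by simp
      ultimately show ?thesis using xV xU LV LA UU KQ' n None unfolding Inv_def by auto
    qed
  qed
qed

lemma final:
  assumes I: "Inv (sth V r h) n" and A: "algo V r h = Inr out"
  shows "\<exists>ecc_out L U. out = (ecc_out, L, U) \<and> n = card U + 2 * card L \<and> (\<forall>v\<in>V. ecc_out v = e v)
     \<and> tight_lower V E L \<and> L \<subseteq> antipode V E r ` V \<and> U = Upre V E"
proof -
  obtain L U P K where S: "sth V r h = (L, U, P, K)" by (metis prod_cases4)
  have LV: "L \<subseteq> V" and LA: "L \<subseteq> antipode V E r ` V" and UU: "U \<subseteq> Upre V E"
    and KQ: "\<forall>y\<in>L \<union> U. K y = Q y"
    and n: "n = card U + 2 * card L + (if P = None then 0 else 1)"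
    using I S unfolding Inv_def by auto
  have UV: "U \<subseteq> V" using UU Upre_sub by blast
  have fU: "finite U" using UV finV finite_subset by blast
  have None: "P = None" using A S unfolding algo_def by (cases P) auto
  have D: "Und V K L U = {}" and out: "out = (lbK K L, L, U)" using A S None unfolding algo_def
    by (auto split: if_splits)
  have nd: "\<not> (L = {} \<or> U = {} \<or> ecc_low E L v < ecc_up V E U v)" if "v \<in> V" for v
    using D undet_eq[OF LV UV KQ that] that unfolding Und_def by auto
  obtain v0 where "v0 \<in> V" using neV by blast
  then have Lne: "L \<noteq> {}" and Une: "U \<noteq> {}" using nd by auto
  have lbe: "ecc_low E L v = e v" and ube: "ecc_up V E U v = e v" if "v \<in> V" for v
    using nd[OF that] low_le[OF LV Lne that] up_ge[OF UV Une that] by auto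
  have "Upre V E \<subseteq> U"
  proof
    fix x assume x: "x \<in> Upre V E"
    then have xV: "x \<in> V" using Upre_sub by blast
    obtain y where y: "y \<in> U" "ecc_up V E U x = d x y + e y" using up_att[OF fU Une] by blast
    then have "preceq V E x y" using ube[OF xV] unfolding preceq_def by simp
    then have "y = x" using x y UV unfolding Upre_def by blast
    then show "x \<in> U" using y by simp
  qed
  then have UE: "U = Upre V E" using UU by blast
  have "\<forall>v\<in>V. lbK K L v = e v" using lbK_eq[OF LV] KQ lbe by simp
  moreover have "tight_lower V E L" unfolding tight_lower_def using LV Lne lbe by simp
  ultimately show ?thesis using out n None LA UE by auto
qed

end

lemma sth_snoc: "sth V r (h @ [p]) = upd V r (sth V r h) p"
  unfolding sth_def by simp

lemma trace_Inl: "A (trace A Q j) = Inl x \<Longrightarrow> trace A Q (Suc j) = trace A Q j @ [(x, Q x)]"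
  by simp

lemma trace_Inr: "A (trace A Q j) = Inr z \<Longrightarrow> trace A Q (Suc j) = trace A Q j"
  by simp

context cgr
begin

abbreviation T where "T j \<equiv> trace (algo V r) Q j"

lemma Inv_st0: "Inv st0 0" unfolding Inv_def st0_def by simp

lemma inv_all: "Inv (sth V r (T j)) (length (T j))"
proof (induction j)
  case 0 then show ?case using Inv_st0 by (simp add: sth_def)
next
  case (Suc j)
  show ?case
  proof (cases "algo V r (T j)")
    case (Inl x)
    have tj: "T (Suc j) = T j @ [(x, Q x)]" using trace_Inl[of "algo V r" Q j x] Inl by blast
    show ?thesis unfolding tj sth_snoc using step[OF Suc Inl] by (simp del: trace.simps)
  next
    case (Inr z)
    then show ?thesis using Suc trace_Inr[of "algo V r" Q j z] by simp
  qed
qed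

lemma Inv_bound: "Inv S n \<Longrightarrow> n \<le> 3 * card V + 1"
proof -
  assume I: "Inv S n"
  obtain L U P K where S: "S = (L, U, P, K)" by (metis prod_cases4)
  have "L \<subseteq> V" "U \<subseteq> V" "n = card U + 2 * card L + (if P = None then 0 else 1)"
    using I S Upre_sub unfolding Inv_def by auto
  moreover have "card L \<le> card V" "card U \<le> card V" using calculation finV card_mono by auto
  ultimately show ?thesis by auto
qed

lemma part1: "\<exists>k ecc_out L U.
          (\<forall>j<k. \<exists>x\<in>V. algo V r (T j) = Inl x)
        \<and> algo V r (T k) = Inr (ecc_out, L, U)
        \<and> k = card U + 2 * card L
        \<and> (\<forall>v\<in>V. ecc_out v = e v)
        \<and> tight_lower V E L \<and> L \<subseteq> antipode V E r ` V
        \<and> U = Upre V E"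
proof -
  have ex: "\<exists>j z. algo V r (T j) = Inr z"
  proof (rule ccontr)
    assume H: "\<not> (\<exists>j z. algo V r (T j) = Inr z)"
    have lj: "length (T j) = j" for j
    proof (induction j)
      case (Suc j)
      obtain x where x: "algo V r (T j) = Inl x" using H by (metis sum.exhaust)
      have tj: "T (Suc j) = T j @ [(x, Q x)]" using trace_Inl[of "algo V r" Q j x] x by blast
      show ?case unfolding tj using Suc by (simp del: trace.simps)
    qed simp
    have "length (T (3 * card V + 2)) \<le> 3 * card V + 1" using Inv_bound[OF inv_all] .
    then show False unfolding lj by simp
  qed
  define k where "k = (LEAST j. \<exists>z. algo V r (T j) = Inr z)"
  obtain z where kz: "algo V r (T k) = Inr z" using LeastI_ex[OF ex] unfolding k_def by blast
  have before: "\<exists>x. algo V r (T j) = Inl x" if "j < k" for j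
    using not_less_Least[OF that[unfolded k_def]] by (metis sum.exhaust)
  have bef2: "\<forall>j<k. \<exists>x\<in>V. algo V r (T j) = Inl x"
  proof (intro allI impI)
    fix j assume "j < k"
    then obtain x where "algo V r (T j) = Inl x" using before by blast
    then show "\<exists>x\<in>V. algo V r (T j) = Inl x" using step[OF inv_all] by blast
  qed
  have len: "j \<le> k \<Longrightarrow> length (T j) = j" for j
  proof (induction j)
    case (Suc j)
    then obtain x where x: "algo V r (T j) = Inl x" using before by fastforce
    have tj: "T (Suc j) = T j @ [(x, Q x)]" using trace_Inl[of "algo V r" Q j x] x by blast
    show ?case unfolding tj using Suc by (simp del: trace.simps)
  qed simp
  obtain ecc_out L U where "z = (ecc_out, L, U)" "length (T k) = card U + 2 * card L" "(\<forall>v\<in>V. ecc_out v = e v)"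
        "tight_lower V E L" "L \<subseteq> antipode V E r ` V" "U = Upre V E"
    using final[OF inv_all kz] by blast
  then show ?thesis using bef2 kz len[of k] by auto
qed

end

theorem theorem5:
  shows "(\<exists>alg :: 'a set \<Rightarrow> ('a \<Rightarrow> 'b::linorder) \<Rightarrow> 'a strategy.
     \<forall>V E r. conn_graph V E \<and> inj_on r V \<longrightarrow>
       (\<exists>k ecc_out L U.
          (\<forall>j<k. \<exists>x\<in>V. alg V r (trace (alg V r) (query V E) j) = Inl x)
        \<and> alg V r (trace (alg V r) (query V E) k) = Inr (ecc_out, L, U)
        \<and> k = card U + 2 * card L
        \<and> (\<forall>v\<in>V. ecc_out v = ecc V E v)
        \<and> tight_lower V E L \<and> L \<subseteq> antipode V E r ` V
        \<and> U = Upre V E))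
   \<and> (\<forall>(V :: 'a set) E. conn_graph V E \<longrightarrow>
        tight_upper V E (Upre V E)
      \<and> (\<forall>U'. tight_upper V E U' \<longrightarrow>
             card (Upre V E) \<le> card U' \<and> (card U' = card (Upre V E) \<longrightarrow> U' = Upre V E)))"
proof (rule conjI)
  show "\<exists>alg :: 'a set \<Rightarrow> ('a \<Rightarrow> 'b::linorder) \<Rightarrow> 'a strategy.
     \<forall>V E r. conn_graph V E \<and> inj_on r V \<longrightarrow>
       (\<exists>k ecc_out L U.
          (\<forall>j<k. \<exists>x\<in>V. alg V r (trace (alg V r) (query V E) j) = Inl x)
        \<and> alg V r (trace (alg V r) (query V E) k) = Inr (ecc_out, L, U)
        \<and> k = card U + 2 * card L
        \<and> (\<forall>v\<in>V. ecc_out v = ecc V E v)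
        \<and> tight_lower V E L \<and> L \<subseteq> antipode V E r ` V
        \<and> U = Upre V E)"
  proof (rule exI[of _ algo], intro allI impI)
    fix V :: "'a set" and E and r :: "'a \<Rightarrow> 'b"
    assume a: "conn_graph V E \<and> inj_on r V"
    interpret cgr V E r using a by unfold_locales auto
    show "\<exists>k ecc_out L U.
          (\<forall>j<k. \<exists>x\<in>V. algo V r (trace (algo V r) (query V E) j) = Inl x)
        \<and> algo V r (trace (algo V r) (query V E) k) = Inr (ecc_out, L, U)
        \<and> k = card U + 2 * card L
        \<and> (\<forall>v\<in>V. ecc_out v = ecc V E v)
        \<and> tight_lower V E L \<and> L \<subseteq> antipode V E r ` V
        \<and> U = Upre V E" using part1 .
  qed
next
  show "\<forall>(V :: 'a set) E. conn_graph V E \<longrightarrow>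
        tight_upper V E (Upre V E)
      \<and> (\<forall>U'. tight_upper V E U' \<longrightarrow>
             card (Upre V E) \<le> card U' \<and> (card U' = card (Upre V E) \<longrightarrow> U' = Upre V E))"
  proof (intro allI impI)
    fix V :: "'a set" and E
    assume "conn_graph V E"
    then interpret cg V E by unfold_locales
    show "tight_upper V E (Upre V E)
      \<and> (\<forall>U'. tight_upper V E U' \<longrightarrow>
             card (Upre V E) \<le> card U' \<and> (card U' = card (Upre V E) \<longrightarrow> U' = Upre V E))"
      using part2 .
  qed
qed

end
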